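(* Let $m\ge d\ge1$, $\lambda=d/m$, and let $\mathcal L=\sum_ic_i(\partial_x\partial_y)^i$ be a linear differential operator with constant coefficients $c_i$. For bivariate polynomials $p(x,y)=y^{m-d}f(xy)$ and $q(x,y)=y^{m-d}g(xy)$ with $f,g$ of degree at most $d$, \[ \mathcal L\{p\boxplus_{d,\lambda}q\}=\mathcal L\{p\}\boxplus_{d,\lambda}q=p\boxplus_{d,\lambda}\mathcal L\{q\}. \]
   Context: For $f=\sum_{i=0}^d(-1)^ia_ix^{d-i}$, $g=\sum_{i=0}^d(-1)^ib_ix^{d-i}$ (degree at most $d$): $(f\boxplus_{d,\lambda}g)(x)=\sum_{k=0}^dx^{d-k}(-1)^k\sum_{i+j=k}\frac{(d-i)!(d-j)!}{d!(d-k)!}\frac{(m-i)!(m-j)!}{m!(m-k)!}a_ib_j$, and for $p=y^{m-d}f(xy)$, $q=y^{m-d}g(xy)$, $p\boxplus_{d,\lambda}q:=y^{m-d}(f\boxplus_{d,\lambda}g)(xy)$. Note $(\partial_x\partial_y)$ maps the space $\{y^{m-d}h(xy):\deg h\le d\}$ into itself. *)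

theory Defs
  imports "HOL-Analysis.Analysis" "HOL-Computational_Algebra.Polynomial"
begin

text \<open>Coefficients in the convention f = sum_i (-1)^i a_i x^(d-i).\<close>
definition acoef :: "nat \<Rightarrow> real poly \<Rightarrow> nat \<Rightarrow> real" where
  "acoef d f i = (-1)^i * coeff f (d - i)"

definition bpweight :: "nat \<Rightarrow> nat \<Rightarrow> nat \<Rightarrow> nat \<Rightarrow> nat \<Rightarrow> real" where
  "bpweight d m i j k =
     (fact (d - i) * fact (d - j)) / (fact d * fact (d - k)) *
     ((fact (m - i) * fact (m - j)) / (fact m * fact (m - k)))"

text \<open>Univariate finite free convolution f boxplus_{d,lambda} g with lambda = d/m.\<close>
definition boxplus :: "nat \<Rightarrow> nat \<Rightarrow> real poly \<Rightarrow> real poly \<Rightarrow> real poly" where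
  "boxplus d m f g =
     (\<Sum>k\<le>d. monom ((-1)^k * (\<Sum>i\<le>k. bpweight d m i (k - i) k
                                   * acoef d f i * acoef d g (k - i))) (d - k))"

definition biv :: "nat \<Rightarrow> nat \<Rightarrow> real poly \<Rightarrow> real \<Rightarrow> real \<Rightarrow> real" where
  "biv d m h = (\<lambda>x y. y ^ (m - d) * poly h (x * y))"

definition dxdy :: "(real \<Rightarrow> real \<Rightarrow> real) \<Rightarrow> real \<Rightarrow> real \<Rightarrow> real" where
  "dxdy P = (\<lambda>x y. deriv (\<lambda>s. deriv (\<lambda>t. P s t) y) x)"

definition Lop :: "(nat \<Rightarrow> real) \<Rightarrow> nat \<Rightarrow> (real \<Rightarrow> real \<Rightarrow> real) \<Rightarrow> real \<Rightarrow> real \<Rightarrow> real" where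
  "Lop c N P = (\<lambda>x y. \<Sum>i\<le>N. c i * (dxdy ^^ i) P x y)"

end

theory Submission
  imports Defs
begin

definition Dop :: "nat \<Rightarrow> real poly \<Rightarrow> real poly" where
  "Dop n h = smult (of_nat n + 1) (pderiv h) + pCons 0 (pderiv (pderiv h))"

lemma coeff_Dop: "coeff (Dop n h) j = of_nat (Suc j) * (of_nat n + 1 + of_nat j) * coeff h (Suc j)"
  by (cases j) (auto simp: Dop_def coeff_pderiv algebra_simps)

lemma poly_Dop: "poly (Dop n h) z = (of_nat n + 1) * poly (pderiv h) z + z * poly (pderiv (pderiv h)) z"
  by (simp add: Dop_def)

lemma inner_deriv:
  "deriv (\<lambda>t. t ^ n * poly h (s * t)) y
     = of_nat n * y ^ (n - 1) * poly h (s * y) + y ^ n * (s * poly (pderiv h) (s * y))"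
proof -
  have "((\<lambda>t. t ^ n * poly h (s * t)) has_field_derivative
      (of_nat n * y ^ (n - 1) * poly h (s * y) + y ^ n * (poly (pderiv h) (s * y) * s))) (at y)"
    by (intro derivative_eq_intros DERIV_chain2[OF poly_DERIV]) auto
  then show ?thesis by (simp add: DERIV_imp_deriv mult_ac)
qed

lemma dxdy_biv: "dxdy (biv d m h) = biv d m (Dop (m - d) h)"
proof (intro ext)
  fix x y :: real
  define n where "n = m - d"
  have e: "(\<lambda>s. deriv (\<lambda>t. biv d m h s t) y) = (\<lambda>s. of_nat n * y ^ (n - 1) * poly h (s * y) + y ^ n * (s * poly (pderiv h) (s * y)))"
    by (simp add: biv_def inner_deriv n_def)
  have "((\<lambda>s. of_nat n * y ^ (n - 1) * poly h (s * y) + y ^ n * (s * poly (pderiv h) (s * y))) has_field_derivative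
     (of_nat n * y ^ (n - 1) * (poly (pderiv h) (x * y) * y) + y ^ n * (poly (pderiv h) (x * y) + x * (poly (pderiv (pderiv h)) (x * y) * y)))) (at x)"
    by (intro derivative_eq_intros DERIV_chain2[OF poly_DERIV]) auto
  then have "dxdy (biv d m h) x y = of_nat n * y ^ (n - 1) * (poly (pderiv h) (x * y) * y) + y ^ n * (poly (pderiv h) (x * y) + x * (poly (pderiv (pderiv h)) (x * y) * y))"
    unfolding dxdy_def e by (simp add: DERIV_imp_deriv)
  also have "\<dots> = biv d m (Dop (m - d) h) x y"
  proof (cases n)
    case 0 then show ?thesis by (simp add: biv_def poly_Dop n_def[symmetric] algebra_simps)
  next
    case (Suc k) then show ?thesis by (simp add: biv_def poly_Dop n_def[symmetric] algebra_simps)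
  qed
  finally show "dxdy (biv d m h) x y = biv d m (Dop (m - d) h) x y" .
qed


definition Sbp :: "nat \<Rightarrow> nat \<Rightarrow> real poly \<Rightarrow> real poly \<Rightarrow> nat \<Rightarrow> real" where
  "Sbp d m f g k = (\<Sum>i\<le>k. bpweight d m i (k - i) k * acoef d f i * acoef d g (k - i))"

lemma coeff_boxplus:
  "coeff (boxplus d m f g) e = (if e \<le> d then (-1) ^ (d - e) * Sbp d m f g (d - e) else 0)"
proof -
  have "coeff (boxplus d m f g) e = (\<Sum>k\<le>d. if k = d - e \<and> e \<le> d then (-1) ^ k * Sbp d m f g k else 0)"
    unfolding boxplus_def coeff_sum coeff_monom Sbp_def
    by (intro sum.cong refl) auto
  also have "\<dots> = (if e \<le> d then (-1) ^ (d - e) * Sbp d m f g (d - e) else 0)"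
    by (cases "e \<le> d") (auto simp: sum.delta)
  finally show ?thesis .
qed

lemma degree_boxplus: "degree (boxplus d m f g) \<le> d"
  by (rule degree_le) (simp add: coeff_boxplus)

lemma acoef_boxplus: "k \<le> d \<Longrightarrow> acoef d (boxplus d m f g) k = Sbp d m f g k"
  by (simp add: acoef_def coeff_boxplus flip: power_add mult.assoc)

lemma acoef_eq:
  assumes "degree p \<le> d" "degree q \<le> d" "\<And>k. k \<le> d \<Longrightarrow> acoef d p k = acoef d q k"
  shows "p = q"
proof (rule poly_eqI)
  fix e
  show "coeff p e = coeff q e"
  proof (cases "e \<le> d")
    case True
    have "acoef d p (d - e) = acoef d q (d - e)" using assms(3) by simp
    then show ?thesis using True by (simp add: acoef_def)
  next
    case False then show ?thesis using assms by (simp add: coeff_eq_0)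
  qed
qed

lemma bpweight_sym: "bpweight d m i j k = bpweight d m j i k"
  by (simp add: bpweight_def mult_ac)

lemma Sbp_sym: "Sbp d m f g k = Sbp d m g f k"
  unfolding Sbp_def
  by (rule sum.reindex_bij_witness[where i="\<lambda>i. k - i" and j="\<lambda>i. k - i"])
     (auto simp: bpweight_sym mult_ac)

lemma boxplus_comm: "boxplus d m f g = boxplus d m g f"
  by (rule poly_eqI) (simp add: coeff_boxplus Sbp_sym)

lemma boxplus_lin:
  assumes "finite A"
  shows "boxplus d m (\<Sum>j\<in>A. smult (c j) (F j)) g = (\<Sum>j\<in>A. smult (c j) (boxplus d m (F j) g))"
proof (rule poly_eqI)
  fix e
  have a: "acoef d (\<Sum>j\<in>A. smult (c j) (F j)) i = (\<Sum>j\<in>A. c j * acoef d (F j) i)" for i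
    by (simp add: acoef_def coeff_sum sum_distrib_left mult_ac)
  show "coeff (boxplus d m (\<Sum>j\<in>A. smult (c j) (F j)) g) e = coeff (\<Sum>j\<in>A. smult (c j) (boxplus d m (F j) g)) e"
    unfolding coeff_boxplus coeff_sum coeff_smult Sbp_def a
    by (auto simp: sum_distrib_left sum_distrib_right mult_ac intro: sum.swap)
qed

lemma weight_shift:
  assumes "i \<le> k" "k < d" "d \<le> m"
  shows "bpweight d m (Suc i) (k - i) (Suc k) * (real (d - i) * real (m - i))
       = bpweight d m i (k - i) k * (real (d - k) * real (m - k))"
proof -
  have 1: "d - i = Suc (d - Suc i)" "d - k = Suc (d - Suc k)" "m - i = Suc (m - Suc i)" "m - k = Suc (m - Suc k)"
    using assms by auto
  have p: "fact (d - Suc k) > (0::real)" "fact m > (0::real)" "fact d > (0::real)" "fact (m - Suc k) > (0::real)"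
    by auto
  show ?thesis
    unfolding bpweight_def 1 using p
    by (simp add: fact_Suc field_simps del: of_nat_Suc)
qed


lemma degree_Dop: "degree h \<le> d \<Longrightarrow> degree (Dop n h) \<le> d"
  by (rule degree_le) (auto simp: coeff_Dop coeff_eq_0)

lemma acoef_Dop0: "degree h \<le> d \<Longrightarrow> acoef d (Dop n h) 0 = 0"
  by (simp add: acoef_def coeff_Dop coeff_eq_0)

lemma acoef_DopS:
  assumes "k < d" "d \<le> m"
  shows "acoef d (Dop (m - d) h) (Suc k) = - (real (d - k) * real (m - k)) * acoef d h k"
proof -
  have 1: "Suc (d - Suc k) = d - k" using assms by auto
  have 2: "real (m - d) + 1 + real (d - Suc k) = real (m - k)" using assms by (simp add: of_nat_diff)
  show ?thesis unfolding acoef_def coeff_Dop 1 2 by simp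
qed

lemma Dop_boxplus:
  assumes "degree f \<le> d" "degree g \<le> d" "d \<le> m"
  shows "Dop (m - d) (boxplus d m f g) = boxplus d m (Dop (m - d) f) g"
proof (rule acoef_eq)
  show "degree (Dop (m - d) (boxplus d m f g)) \<le> d" by (intro degree_Dop degree_boxplus)
  show "degree (boxplus d m (Dop (m - d) f) g) \<le> d" by (rule degree_boxplus)
  fix k assume k: "k \<le> d"
  show "acoef d (Dop (m - d) (boxplus d m f g)) k = acoef d (boxplus d m (Dop (m - d) f) g) k"
  proof (cases k)
    case 0
    then show ?thesis using k assms
      by (simp add: acoef_boxplus acoef_Dop0 degree_boxplus Sbp_def)
  next
    case (Suc k')
    then have k': "k' < d" using k by auto
    have "acoef d (boxplus d m (Dop (m - d) f) g) k = Sbp d m (Dop (m - d) f) g (Suc k')"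
      using k Suc by (simp add: acoef_boxplus)
    also have "\<dots> = (\<Sum>i\<le>k'. bpweight d m (Suc i) (k' - i) (Suc k') * acoef d (Dop (m - d) f) (Suc i) * acoef d g (k' - i))"
      unfolding Sbp_def sum.atMost_Suc_shift using assms by (simp add: acoef_Dop0)
    also have "\<dots> = (\<Sum>i\<le>k'. - (real (d - k') * real (m - k')) * (bpweight d m i (k' - i) k' * acoef d f i * acoef d g (k' - i)))"
    proof (intro sum.cong refl)
      fix i assume i: "i \<in> {..k'}"
      have "bpweight d m (Suc i) (k' - i) (Suc k') * acoef d (Dop (m - d) f) (Suc i)
          = - (bpweight d m (Suc i) (k' - i) (Suc k') * (real (d - i) * real (m - i))) * acoef d f i"
        using i k' assms by (simp add: acoef_DopS)
      also have "\<dots> = - (bpweight d m i (k' - i) k' * (real (d - k') * real (m - k'))) * acoef d f i"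
        by (subst weight_shift[of i k' d m]) (use i k' assms in auto)
      finally show "bpweight d m (Suc i) (k' - i) (Suc k') * acoef d (Dop (m - d) f) (Suc i) * acoef d g (k' - i)
         = - (real (d - k') * real (m - k')) * (bpweight d m i (k' - i) k' * acoef d f i * acoef d g (k' - i))"
        by simp
    qed
    also have "\<dots> = - (real (d - k') * real (m - k')) * Sbp d m f g k'"
      by (simp add: Sbp_def sum_distrib_left)
    also have "\<dots> = acoef d (Dop (m - d) (boxplus d m f g)) k"
      using Suc k' assms by (simp add: acoef_DopS acoef_boxplus)
    finally show ?thesis by simp
  qed
qed

lemma Dop_pow_boxplus:
  assumes "degree f \<le> d" "degree g \<le> d" "d \<le> m"
  shows "(Dop (m - d) ^^ i) (boxplus d m f g) = boxplus d m ((Dop (m - d) ^^ i) f) g \<and> degree ((Dop (m - d) ^^ i) f) \<le> d"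
proof (induction i)
  case 0 then show ?case using assms by simp
next
  case (Suc i) then show ?case using assms by (simp add: Dop_boxplus degree_Dop)
qed

lemma dxdy_pow_biv: "(dxdy ^^ i) (biv d m h) = biv d m ((Dop (m - d) ^^ i) h)"
  by (induction i) (simp_all add: dxdy_biv)

lemma Lop_biv: "Lop c N (biv d m h) = biv d m (\<Sum>i\<le>N. smult (c i) ((Dop (m - d) ^^ i) h))"
  unfolding Lop_def dxdy_pow_biv by (simp add: biv_def poly_sum sum_distrib_left mult_ac)

theorem mainTheorem14:
  fixes d m N :: nat and c :: "nat \<Rightarrow> real" and f g :: "real poly"
  assumes "1 \<le> d" and "d \<le> m"
    and "degree f \<le> d" and "degree g \<le> d"
  shows "\<exists>f' g'. degree f' \<le> d \<and> degree g' \<le> d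
           \<and> Lop c N (biv d m f) = biv d m f'
           \<and> Lop c N (biv d m g) = biv d m g'
           \<and> Lop c N (biv d m (boxplus d m f g)) = biv d m (boxplus d m f' g)
           \<and> Lop c N (biv d m (boxplus d m f g)) = biv d m (boxplus d m f g')"
proof -
  define F where "F h = (\<Sum>i\<le>N. smult (c i) ((Dop (m - d) ^^ i) h))" for h
  have degF: "degree (F h) \<le> d" if "degree h \<le> d" for h
    unfolding F_def
    by (intro degree_sum_le) (auto intro: order.trans[OF degree_smult_le] Dop_pow_boxplus[OF that that assms(2), THEN conjunct2])
  have comm: "F (boxplus d m p q) = boxplus d m (F p) q" if "degree p \<le> d" "degree q \<le> d" for p q
    unfolding F_def boxplus_lin[OF finite_atMost]
    using Dop_pow_boxplus[OF that assms(2)] by simp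
  have L: "Lop c N (biv d m h) = biv d m (F h)" for h by (simp add: Lop_biv F_def)
  show ?thesis
  proof (intro exI conjI)
    show "degree (F f) \<le> d" "degree (F g) \<le> d" using degF assms by auto
    show "Lop c N (biv d m f) = biv d m (F f)" "Lop c N (biv d m g) = biv d m (F g)" by (rule L)+
    show "Lop c N (biv d m (boxplus d m f g)) = biv d m (boxplus d m (F f) g)"
      using L comm assms by simp
    have "boxplus d m f (F g) = boxplus d m (F g) f" by (rule boxplus_comm)
    also have "\<dots> = F (boxplus d m g f)" using comm assms by simp
    finally show "Lop c N (biv d m (boxplus d m f g)) = biv d m (boxplus d m f (F g))"
      using L boxplus_comm by metis
  qed
qed

end
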